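(* Let $m,n\ge1$ be integers and let $L=J(2m+1,2n+1)$ be oriented so that $\alpha(a)=\alpha(b)=t$. For $1\le j<m/2$ and $1\le k\le n-1$ let $$Y_{j,k}=\Big\{(x,y,z)\in\mathbb{C}^3 \ \Big|\ z=2\cos\tfrac{2j\pi}{m},\ xy-z=2\cos\tfrac{k\pi}{n}\Big\},$$ let $v_1=xy+2+(m^2+m)(x+y)^2$ and $Y=\{(x,y,z)\in\mathbb{C}^3\mid z=-2,\ mS_n(v_1)+(m+1)S_{n-1}(v_1)=0\}$. (1) If $m$ is odd, then $\deg\Delta_{L,\chi}(t)=4n=4g(L)$ for every $\chi\in\{R(x,y,z)=0\}\setminus\bigcup_{1\le j<m/2,\,1\le k\le n-1}Y_{j,k}$. (2) If $m$ is even, then $\deg\Delta_{L,\chi}(t)=4n=4g(L)$ for every $\chi\in\{R(x,y,z)=0\}\setminus Y\setminus\bigcup_{1\le j<m/2,\,1\le k\le n-1}Y_{j,k}$.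
   Context: Chebyshev polynomials: $S_k(q)$ is defined for all integers $k$ by $S_0=1$, $S_1=q$, $S_{k+1}=qS_k-S_{k-1}$. For integers $m,n\ge1$, $L=J(2m+1,2n+1)$ is the double twist link, the two-component $2$-bridge link corresponding to $\frac{2n+1}{4mn+2(m+n)}$, with a twist region of $2m+1$ crossings and one of $2n+1$ crossings. Its group has the presentation $G(L)=\langle a,b\mid awa^{-1}=w\rangle$ with $w=(b^{-1}a)^m\big((ba^{-1})^mba(b^{-1}a)^m\big)^n$, where $a,b$ are meridians of the two components; the orientation considered is the one in which $a$ and $b$ are both positively oriented meridians, so $\alpha:G(L)\to\langle t\rangle$ sends $a\mapsto t$, $b\mapsto t$ (for this orientation $g(L)=n$, and $L$ is fibered iff $m=1$). For $\rho:G(L)\to SL(2,\mathbb{C})$, let $\Phi$ be the ring homomorphism from the group ring of the free group on $a,b$ to $M(2,\mathbb{C}[t^{\pm1}])$ induced by $g\mapsto\alpha(g)\rho(g)$; the twisted Alexander polynomial is $\Delta_{L,\rho}(t)=\det\Phi(\partial r/\partial b)/\det\Phi(1-a)$ with $r=awa^{-1}w^{-1}$ and $\partial$ the Fox derivative; it is a Laurent polynomial defined up to multiplication by $t^{2k}$ and depends only on the character of $\rho$, so one writes $\Delta_{L,\chi}$ for a character $\chi$. Its degree is the highest minus the lowest exponent of $t$ with nonzero coefficient. Characters are given coordinates $(x,y,z)=(\operatorname{tr}\rho(a),\operatorname{tr}\rho(b),\operatorname{tr}\rho(ab^{-1}))$; the characters of non-abelian representations form exactly the zero set in $\mathbb{C}^3$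 of $R(x,y,z)=S_{m-1}(z)S_n(v)-S_m(z)S_{n-1}(v)$, where $v=\big(xS_m(z)-yS_{m-1}(z)\big)\big(yS_m(z)-xS_{m-1}(z)\big)-z\big(S_m^2(z)+S_{m-1}^2(z)\big)+4S_m(z)S_{m-1}(z)$. $g(L)$ denotes the genus of the oriented link. *)

theory Defs
  imports "HOL-Analysis.Analysis" "HOL-Computational_Algebra.Formal_Laurent_Series"
begin

fun cheb :: "nat \<Rightarrow> complex \<Rightarrow> complex" where
  "cheb 0 q = 1"
| "cheb (Suc 0) q = q"
| "cheb (Suc (Suc k)) q = q * cheb (Suc k) q - cheb k q"

datatype gen = GA | GB

type_synonym letter = "gen \<times> bool"   (* (generator, True = inverse letter) *)
type_synonym word = "letter list"

definition winv :: "word \<Rightarrow> word" where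
  "winv w = rev (map (\<lambda>(g, e). (g, \<not> e)) w)"

definition wpow :: "word \<Rightarrow> nat \<Rightarrow> word" where
  "wpow w k = concat (replicate k w)"

(* w = (b^-1 a)^m ((b a^-1)^m b a (b^-1 a)^m)^n *)
definition Jw :: "nat \<Rightarrow> nat \<Rightarrow> word" where
  "Jw m n = wpow [(GB, True), (GA, False)] m @
     wpow (wpow [(GB, False), (GA, True)] m @ [(GB, False), (GA, False)]
           @ wpow [(GB, True), (GA, False)] m) n"

definition Jr :: "nat \<Rightarrow> nat \<Rightarrow> word" where
  "Jr m n = [(GA, False)] @ Jw m n @ [(GA, True)] @ winv (Jw m n)"

type_synonym cmat = "complex^2^2"

(* inverse of a matrix of determinant 1 (adjugate) *)
definition sl2_inv :: "'a::comm_ring_1^2^2 \<Rightarrow> 'a^2^2" where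
  "sl2_inv M = (\<chi> i j. if i = j then M$(if i = 1 then 2 else 1)$(if i = 1 then 2 else 1)
                         else - M$i$j)"

definition rho_letter :: "cmat \<Rightarrow> cmat \<Rightarrow> letter \<Rightarrow> cmat" where
  "rho_letter A B l = (let M = (if fst l = GA then A else B) in
                       if snd l then sl2_inv M else M)"

definition rho_word :: "cmat \<Rightarrow> cmat \<Rightarrow> word \<Rightarrow> cmat" where
  "rho_word A B w = foldr (\<lambda>l M. rho_letter A B l ** M) w (mat 1)"

section \<open>The map Phi: g \<mapsto> alpha(g) rho(g), into 2x2 matrices over Laurent series in t\<close>

type_synonym lmat = "complex fls^2^2"

definition lift_mat :: "cmat \<Rightarrow> lmat" where
  "lift_mat M = (\<chi> i j. fls_const (M$i$j))"

definition Phi_letter :: "cmat \<Rightarrow> cmat \<Rightarrow> letter \<Rightarrow> lmat" where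
  "Phi_letter A B l = (\<chi> i j. (if snd l then fls_X_inv else fls_X) * lift_mat (rho_letter A B l) $ i $ j)"

definition Phi_word :: "cmat \<Rightarrow> cmat \<Rightarrow> word \<Rightarrow> lmat" where
  "Phi_word A B w = foldr (\<lambda>l M. Phi_letter A B l ** M) w (mat 1)"

(* Phi applied to the Fox derivative d/db of a letter *)
definition fox_b_letter :: "cmat \<Rightarrow> cmat \<Rightarrow> letter \<Rightarrow> lmat" where
  "fox_b_letter A B l = (if fst l = GA then 0
                         else if snd l then - Phi_letter A B l else mat 1)"

(* Phi(d w / d b), via d(g u)/db = dg/db + g du/db *)
fun Phi_fox_b :: "cmat \<Rightarrow> cmat \<Rightarrow> word \<Rightarrow> lmat" where
  "Phi_fox_b A B [] = 0"
| "Phi_fox_b A B (l # w) = fox_b_letter A B l + Phi_letter A B l ** Phi_fox_b A B w"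

definition twisted_alex :: "nat \<Rightarrow> nat \<Rightarrow> cmat \<Rightarrow> cmat \<Rightarrow> complex fls" where
  "twisted_alex m n A B =
     det (Phi_fox_b A B (Jr m n)) / det (mat 1 - Phi_letter A B (GA, False))"

definition is_laurent_poly :: "complex fls \<Rightarrow> bool" where
  "is_laurent_poly f \<longleftrightarrow> finite {k. fls_nth f k \<noteq> 0}"

definition laurent_deg :: "complex fls \<Rightarrow> int" where
  "laurent_deg f = (GREATEST k. fls_nth f k \<noteq> 0) - fls_subdegree f"

definition Rpoly :: "nat \<Rightarrow> nat \<Rightarrow> complex \<Rightarrow> complex \<Rightarrow> complex \<Rightarrow> complex" where
  "Rpoly m n x y z =
    (let v = (x * cheb m z - y * cheb (m-1) z) * (y * cheb m z - x * cheb (m-1) z)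
             - z * ((cheb m z)^2 + (cheb (m-1) z)^2) + 4 * cheb m z * cheb (m-1) z
     in cheb (m-1) z * cheb n v - cheb m z * cheb (n-1) v)"

definition Yjk :: "nat \<Rightarrow> nat \<Rightarrow> nat \<Rightarrow> nat \<Rightarrow> (complex \<times> complex \<times> complex) set" where
  "Yjk m n j k = {(x, y, z). z = complex_of_real (2 * cos (2 * real j * pi / real m)) \<and>
                             x * y - z = complex_of_real (2 * cos (real k * pi / real n))}"

definition Yexc :: "nat \<Rightarrow> nat \<Rightarrow> (complex \<times> complex \<times> complex) set" where
  "Yexc m n = {(x, y, z). z = -2 \<and>
     (let v1 = x * y + 2 + (of_nat (m^2 + m)) * (x + y)^2
      in of_nat m * cheb n v1 + of_nat (m + 1) * cheb (n-1) v1 = 0)}"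

end

theory Submission
  imports Defs
begin

no_notation fps_nth (infixl "$" 75)
notation fls_nth (infixl "$$" 75)

definition sb :: "complex fls \<Rightarrow> int \<Rightarrow> int \<Rightarrow> bool" where
  "sb f l h \<longleftrightarrow> (\<forall>k. (k < l \<or> h < k) \<longrightarrow> f $$ k = 0)"

lemma sb_nth: "sb f l h \<Longrightarrow> k < l \<or> h < k \<Longrightarrow> f $$ k = 0"
  by (auto simp: sb_def)

lemma fls_times_nth_gen:
  assumes "sb f l h"
  shows "(f*g) $$ n = (\<Sum>i=l..h. f$$i * g$$(n-i))"
proof (cases "f = 0 \<or> g = 0")
  case True
  then show ?thesis
  proof
    assume "f = 0" thus ?thesis by simp
  next
    assume "g = 0" thus ?thesis by simp
  qed
next
  case False
  define df where "df = fls_subdegree f"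
  define dg where "dg = fls_subdegree g"
  define S where "S = {min l df .. max h (n - dg)}"
  have "(f*g) $$ n = (\<Sum>i=df..n - dg. f $$ i * g $$ (n - i))"
    unfolding df_def dg_def by (rule fls_times_nth(2))
  also have "\<dots> = (\<Sum>i\<in>S. f $$ i * g $$ (n - i))"
  proof (rule sum.mono_neutral_left)
    show "finite S" by (simp add: S_def)
    show "{df..n - dg} \<subseteq> S" by (auto simp: S_def)
    show "\<forall>i\<in>S - {df..n - dg}. f $$ i * g $$ (n - i) = 0"
    proof
      fix i assume "i \<in> S - {df..n - dg}"
      hence "i < df \<or> n - i < dg" by auto
      thus "f $$ i * g $$ (n - i) = 0" unfolding df_def dg_def by auto
    qed
  qed
  also have "\<dots> = (\<Sum>i=l..h. f$$i * g$$(n-i))"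
  proof (rule sum.mono_neutral_right)
    show "finite S" by (simp add: S_def)
    show "{l..h} \<subseteq> S" by (auto simp: S_def)
    show "\<forall>i\<in>S - {l..h}. f $$ i * g $$ (n - i) = 0"
      using assms by (auto simp: sb_def)
  qed
  finally show ?thesis .
qed

lemma sb_mult:
  assumes f: "sb f l1 h1" and g: "sb g l2 h2"
  shows "sb (f*g) (l1+l2) (h1+h2)" "(f*g) $$ (l1+l2) = f$$l1 * g$$l2"
    "(f*g) $$ (h1+h2) = f$$h1 * g$$h2"
proof -
  have E: "(f*g) $$ n = (\<Sum>i=l1..h1. f$$i * g$$(n-i))" for n
    by (rule fls_times_nth_gen[OF f])
  show "sb (f*g) (l1+l2) (h1+h2)"
    unfolding sb_def
  proof (intro allI impI)
    fix k assume k: "k < l1 + l2 \<or> h1 + h2 < k"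
    have "\<forall>i\<in>{l1..h1}. f$$i * g$$(k-i) = 0"
      using k g by (auto simp: sb_def)
    hence "(\<Sum>i=l1..h1. f$$i * g$$(k-i)) = 0" by (intro sum.neutral) blast
    thus "(f*g) $$ k = 0" by (simp add: E)
  qed
  show "(f*g) $$ (l1+l2) = f$$l1 * g$$l2"
  proof (cases "l1 \<le> h1")
    case True
    have "(f*g) $$ (l1+l2) = (\<Sum>i\<in>{l1}. f$$i * g$$(l1+l2-i))"
    proof -
      have "(\<Sum>i=l1..h1. f$$i * g$$(l1+l2-i)) = (\<Sum>i\<in>{l1}. f$$i * g$$(l1+l2-i))"
        by (rule sum.mono_neutral_right) (use True g in \<open>auto simp: sb_def\<close>)
      thus ?thesis by (simp add: E)
    qed
    thus ?thesis by simp
  next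
    case False
    thus ?thesis using f by (simp add: E sb_def)
  qed
  show "(f*g) $$ (h1+h2) = f$$h1 * g$$h2"
  proof (cases "l1 \<le> h1")
    case True
    have "(\<Sum>i=l1..h1. f$$i * g$$(h1+h2-i)) = (\<Sum>i\<in>{h1}. f$$i * g$$(h1+h2-i))"
      by (rule sum.mono_neutral_right) (use True g in \<open>auto simp: sb_def\<close>)
    thus ?thesis by (simp add: E)
  next
    case False
    thus ?thesis using f by (simp add: E sb_def)
  qed
qed

lemma sb_add: "sb f l h \<Longrightarrow> sb g l h \<Longrightarrow> sb (f+g) l h"
  and sb_diff: "sb f l h \<Longrightarrow> sb g l h \<Longrightarrow> sb (f-g) l h"
  and sb_uminus: "sb f l h \<Longrightarrow> sb (-f) l h"
  and sb_zero: "sb 0 l h"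
  and sb_mono: "sb f l h \<Longrightarrow> l' \<le> l \<Longrightarrow> h \<le> h' \<Longrightarrow> sb f l' h'"
  by (auto simp: sb_def)

lemma sb_const: "sb (fls_const c) 0 0" and sb_X: "sb fls_X 1 1" and sb_Xi: "sb fls_X_inv (-1) (-1)"
  and sb_one: "sb 1 0 0"
  by (auto simp: sb_def)

definition mb :: "lmat \<Rightarrow> int \<Rightarrow> int \<Rightarrow> bool" where
  "mb M l h \<longleftrightarrow> (\<forall>i j. sb (M$i$j) l h)"
definition cf :: "lmat \<Rightarrow> int \<Rightarrow> cmat" where
  "cf M k = (\<chi> i j. M$i$j $$ k)"

lemma cf_nth [simp]: "cf M k $ i $ j = M$i$j $$ k" by (simp add: cf_def)

lemma mult_2x2: "((M::'a::semiring_1^2^2) ** N)$i$j = M$i$1*N$1$j + M$i$2*N$2$j"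
  by (simp add: matrix_matrix_mult_def sum_2)

lemma mb_mult:
  assumes M: "mb M l1 h1" and N: "mb N l2 h2"
  shows "mb (M**N) (l1+l2) (h1+h2)" "cf (M**N) (l1+l2) = cf M l1 ** cf N l2"
    "cf (M**N) (h1+h2) = cf M h1 ** cf N h2"
proof -
  have s: "sb (M$i$k) l1 h1" "sb (N$k$j) l2 h2" for i j k using M N by (auto simp: mb_def)
  show "mb (M**N) (l1+l2) (h1+h2)"
    unfolding mb_def mult_2x2 by (intro allI sb_add sb_mult(1) s)
  show "cf (M**N) (l1+l2) = cf M l1 ** cf N l2"
    by (simp add: vec_eq_iff mult_2x2 sb_mult(2)[OF s(1) s(2)])
  show "cf (M**N) (h1+h2) = cf M h1 ** cf N h2"
    by (simp add: vec_eq_iff mult_2x2 sb_mult(3)[OF s(1) s(2)])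
qed

lemma mb_add: "mb M l h \<Longrightarrow> mb N l h \<Longrightarrow> mb (M+N) l h"
  and mb_diff: "mb M l h \<Longrightarrow> mb N l h \<Longrightarrow> mb (M-N) l h"
  and mb_uminus: "mb M l h \<Longrightarrow> mb (-M) l h"
  and mb_zero: "mb 0 l h"
  and mb_mono: "mb M l h \<Longrightarrow> l' \<le> l \<Longrightarrow> h \<le> h' \<Longrightarrow> mb M l' h'"
  by (auto simp: mb_def sb_def)

lemma cf_add [simp]: "cf (M+N) k = cf M k + cf N k"
  and cf_diff [simp]: "cf (M-N) k = cf M k - cf N k"
  and cf_uminus [simp]: "cf (-M) k = - cf M k"
  and cf_zero [simp]: "cf 0 k = 0"
  by (auto simp: vec_eq_iff)

lemma mb_one: "mb (mat 1) 0 0" and cf_one: "cf (mat 1) 0 = mat 1"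
  by (auto simp: mb_def sb_def vec_eq_iff mat_def)

lemma cf_out: "mb M l h \<Longrightarrow> k < l \<or> h < k \<Longrightarrow> cf M k = 0"
  by (auto simp: mb_def sb_def vec_eq_iff)

lemma mb_disj:
  assumes "mb M l1 h1" "mb N l2 h2" "l1 \<le> h1" "h1 < l2" "l2 \<le> h2"
  shows "mb (M+N) l1 h2" "cf (M+N) l1 = cf M l1" "cf (M+N) h2 = cf N h2"
proof -
  show "mb (M+N) l1 h2" using assms by (intro mb_add) (auto intro: mb_mono)
  show "cf (M+N) l1 = cf M l1" using cf_out[OF assms(2), of l1] assms by simp
  show "cf (M+N) h2 = cf N h2" using cf_out[OF assms(1), of h2] assms by simp
qed

lemma mb_eq:
  assumes "mb M k k" "mb N k k" "cf M k = cf N k"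
  shows "M = N"
proof -
  have "M$i$j = N$i$j" for i j
  proof (rule fls_eqI)
    fix n
    show "M$i$j $$ n = N$i$j $$ n"
    proof (cases "n = k")
      case True
      thus ?thesis using assms(3) by (metis cf_nth)
    next
      case False
      hence "n < k \<or> k < n" by auto
      thus ?thesis using assms(1,2) by (auto simp: mb_def sb_def)
    qed
  qed
  thus ?thesis by (simp add: vec_eq_iff)
qed

lemma mb_det:
  assumes M: "mb M l h"
  shows "sb (det M) (l+l) (h+h)" "det M $$ (l+l) = det (cf M l)" "det M $$ (h+h) = det (cf M h)"
proof -
  have s: "sb (M$i$j) l h" for i j using M by (auto simp: mb_def)
  show "sb (det M) (l+l) (h+h)" unfolding det_2 by (intro sb_diff sb_mult(1) s)
  show "det M $$ (l+l) = det (cf M l)" by (simp only: det_2 fls_minus_nth sb_mult(2)[OF s s] cf_nth)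
  show "det M $$ (h+h) = det (cf M h)" by (simp only: det_2 fls_minus_nth sb_mult(3)[OF s s] cf_nth)
qed

lemma mm_add_r: "((M::'a::comm_ring_1^2^2) + N) ** C = M ** C + N ** C"
  by (simp add: vec_eq_iff mult_2x2 algebra_simps)
lemma mm_add_l: "(C::'a::comm_ring_1^2^2) ** (M + N) = C ** M + C ** N"
  by (simp add: vec_eq_iff mult_2x2 algebra_simps)
lemma mm_diff_r: "((M::'a::comm_ring_1^2^2) - N) ** C = M ** C - N ** C"
  by (simp add: vec_eq_iff mult_2x2 algebra_simps)
lemma mm_diff_l: "(C::'a::comm_ring_1^2^2) ** (M - N) = C ** M - C ** N"
  by (simp add: vec_eq_iff mult_2x2 algebra_simps)
lemma mm_uminus_l: "(- (M::'a::comm_ring_1^2^2)) ** C = - (M ** C)"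
  by (simp add: vec_eq_iff mult_2x2 algebra_simps)
lemma mm_uminus_r: "(C::'a::comm_ring_1^2^2) ** (- M) = - (C ** M)"
  by (simp add: vec_eq_iff mult_2x2 algebra_simps)

definition wl :: "letter \<Rightarrow> int" where "wl l = (if snd l then -1 else 1)"
definition wt :: "word \<Rightarrow> int" where "wt w = sum_list (map wl w)"

lemma wt_simps [simp]: "wt [] = 0" "wt (l#w) = wl l + wt w" "wt (u@v) = wt u + wt v"
  by (auto simp: wt_def)

lemma wt_wpow [simp]: "wt (wpow u k) = int k * wt u"
  by (induction k) (auto simp: wpow_def algebra_simps)

lemma wpow_0 [simp]: "wpow u 0 = []" and wpow_Suc: "wpow u (Suc k) = u @ wpow u k"
  by (auto simp: wpow_def)

lemma Phi_letter_mb: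
  "mb (Phi_letter A B l) (wl l) (wl l) \<and> cf (Phi_letter A B l) (wl l) = rho_letter A B l"
proof (cases "snd l")
  case True
  have s: "sb (fls_X_inv * fls_const c) (-1 + 0) (-1 + 0)" "(fls_X_inv * fls_const c) $$ (-1+0) = c" for c
    using sb_mult[OF sb_Xi sb_const, of c] by auto
  show ?thesis using True s
    by (auto simp: mb_def Phi_letter_def lift_mat_def wl_def vec_eq_iff)
next
  case False
  have s: "sb (fls_X * fls_const c) (1 + 0) (1 + 0)" "(fls_X * fls_const c) $$ (1+0) = c" for c
    using sb_mult[OF sb_X sb_const, of c] by auto
  show ?thesis using False s
    by (auto simp: mb_def Phi_letter_def lift_mat_def wl_def vec_eq_iff)
qed

lemma Phi_word_simps [simp]: "Phi_word A B [] = mat 1" "Phi_word A B (l#w) = Phi_letter A B l ** Phi_word A B w"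
  by (auto simp: Phi_word_def)
lemma rho_word_simps [simp]: "rho_word A B [] = mat 1" "rho_word A B (l#w) = rho_letter A B l ** rho_word A B w"
  by (auto simp: rho_word_def)

lemma Phi_word_append: "Phi_word A B (u@v) = Phi_word A B u ** Phi_word A B v"
  by (induction u) (auto simp: matrix_mul_assoc)
lemma rho_word_append: "rho_word A B (u@v) = rho_word A B u ** rho_word A B v"
  by (induction u) (auto simp: matrix_mul_assoc)
lemma Phi_fox_b_append: "Phi_fox_b A B (u@v) = Phi_fox_b A B u + Phi_word A B u ** Phi_fox_b A B v"
  by (induction u) (auto simp: matrix_mul_assoc matrix_add_ldistrib add.assoc)

lemma Phi_word_mb:
  "mb (Phi_word A B w) (wt w) (wt w) \<and> cf (Phi_word A B w) (wt w) = rho_word A B w"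
proof (induction w)
  case Nil
  then show ?case using mb_one cf_one by simp
next
  case (Cons l w)
  note L = Phi_letter_mb[of A B l]
  show ?case using mb_mult[of "Phi_letter A B l" "wl l" "wl l" "Phi_word A B w" "wt w" "wt w"] L Cons
    by auto
qed

fun mp :: "cmat \<Rightarrow> nat \<Rightarrow> cmat" where
  "mp X 0 = mat 1" | "mp X (Suc k) = X ** mp X k"
fun gs :: "cmat \<Rightarrow> nat \<Rightarrow> cmat" where
  "gs X 0 = 0" | "gs X (Suc k) = mat 1 + X ** gs X k"

lemma rho_wpow: "rho_word A B (wpow u k) = mp (rho_word A B u) k"
  by (induction k) (auto simp: wpow_Suc rho_word_append)

lemma fox_wpow0:
  assumes w: "wt u = 0" and F: "mb (Phi_fox_b A B u) l h"
  shows "mb (Phi_fox_b A B (wpow u k)) l h \<and>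
     cf (Phi_fox_b A B (wpow u k)) l = gs (rho_word A B u) k ** cf (Phi_fox_b A B u) l \<and>
     cf (Phi_fox_b A B (wpow u k)) h = gs (rho_word A B u) k ** cf (Phi_fox_b A B u) h"
proof (induction k)
  case 0
  then show ?case by (simp add: mb_zero)
next
  case (Suc k)
  have P: "mb (Phi_word A B u) 0 0" "cf (Phi_word A B u) 0 = rho_word A B u"
    using Phi_word_mb[of A B u] w by auto
  note M = mb_mult[OF P(1) conjunct1[OF Suc.IH]]
  show ?case
    using M Suc.IH P F
    by (auto simp: wpow_Suc Phi_fox_b_append intro!: mb_add simp: mm_add_r matrix_mul_assoc)
qed

lemma fox_wpow2:
  assumes w: "wt u = 2" and F: "mb (Phi_fox_b A B u) 0 1"
  shows "mb (Phi_fox_b A B (wpow u (Suc k))) 0 (2 * int k + 1) \<and>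
     cf (Phi_fox_b A B (wpow u (Suc k))) (2 * int k + 1) = mp (rho_word A B u) k ** cf (Phi_fox_b A B u) 1"
proof (induction k)
  case 0
  then show ?case using F by (simp add: wpow_Suc)
next
  case (Suc k)
  have P: "mb (Phi_word A B u) 2 2" "cf (Phi_word A B u) 2 = rho_word A B u"
    using Phi_word_mb[of A B u] w by auto
  note M = mb_mult[OF P(1) conjunct1[OF Suc.IH]]
  have e: "2 + (2 * int k + 1) = 2 * int (Suc k) + 1" by simp
  note D = mb_disj[OF F M(1), unfolded e]
  show ?case
    using D M(3) Suc.IH P
    by (simp add: wpow_Suc[of u "Suc k"] Phi_fox_b_append e matrix_mul_assoc)
qed

lemma sl2_inv_nth [simp]:
  "sl2_inv M $ 1 $ 1 = M $ 2 $ 2" "sl2_inv M $ 1 $ 2 = - M $ 1 $ 2"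
  "sl2_inv M $ 2 $ 1 = - M $ 2 $ 1" "sl2_inv M $ 2 $ 2 = M $ 1 $ 1"
  by (simp_all add: sl2_inv_def)

lemma sl2_inv_mult:
  fixes M :: "'a::comm_ring_1^2^2"
  assumes "det M = 1"
  shows "M ** sl2_inv M = mat 1" "sl2_inv M ** M = mat 1"
  using assms by (auto simp: vec_eq_iff forall_2 mult_2x2 det_2 mat_def algebra_simps)

lemma det_sl2_inv: "det (sl2_inv (M::'a::comm_ring_1^2^2)) = det M"
  by (simp add: det_2 algebra_simps)

lemma det_uminus2: "det (- (M::'a::comm_ring_1^2^2)) = det M"
  by (simp add: det_2)

lemma det_rho_letter: "det A = 1 \<Longrightarrow> det B = 1 \<Longrightarrow> det (rho_letter A B l) = 1"
  by (auto simp: rho_letter_def Let_def det_sl2_inv)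

lemma det_rho_word: "det A = 1 \<Longrightarrow> det B = 1 \<Longrightarrow> det (rho_word A B w) = 1"
  by (induction w) (auto simp: det_mul det_rho_letter)

definition linv :: "letter \<Rightarrow> letter" where "linv l = (fst l, \<not> snd l)"

lemma winv_simps [simp]: "winv [] = []" "winv (l#w) = winv w @ [linv l]"
  by (auto simp: winv_def linv_def split_beta)

lemma wt_winv [simp]: "wt (winv w) = - wt w"
  by (induction w) (auto simp: linv_def wl_def)

lemma rho_letter_inv:
  assumes "det A = 1" "det B = 1"
  shows "rho_letter A B l ** rho_letter A B (linv l) = mat 1"
        "rho_letter A B (linv l) ** rho_letter A B l = mat 1"
  using assms sl2_inv_mult[of A] sl2_inv_mult[of B]
  by (auto simp: rho_letter_def linv_def Let_def)

lemma rho_winv: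
  assumes "det A = 1" "det B = 1"
  shows "rho_word A B w ** rho_word A B (winv w) = mat 1"
proof (induction w)
  case Nil then show ?case by simp
next
  case (Cons l w)
  have "rho_word A B (l # w) ** rho_word A B (winv (l # w)) =
        rho_letter A B l ** (rho_word A B w ** rho_word A B (winv w)) ** rho_letter A B (linv l)"
    by (simp add: rho_word_append matrix_mul_assoc)
  also have "\<dots> = mat 1" using Cons rho_letter_inv[OF assms] by simp
  finally show ?case .
qed

lemma Phi_letter_inv:
  assumes "det A = 1" "det B = 1"
  shows "Phi_letter A B (linv l) ** Phi_letter A B l = mat 1"
proof -
  note L1 = Phi_letter_mb[of A B "linv l"] and L2 = Phi_letter_mb[of A B l]
  have e: "wl (linv l) + wl l = 0" by (simp add: wl_def linv_def)
  note M = mb_mult[OF conjunct1[OF L1] conjunct1[OF L2], unfolded e]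
  show ?thesis
    by (rule mb_eq[OF M(1) mb_one]) (use M(2) L1 L2 rho_letter_inv[OF assms] cf_one in auto)
qed

lemma linv_linv [simp]: "linv (linv l) = l" by (simp add: linv_def)

lemma fox_letter_inv:
  assumes "det A = 1" "det B = 1"
  shows "fox_b_letter A B (linv l) = - (Phi_letter A B (linv l) ** fox_b_letter A B l)"
proof -
  obtain g e where l: "l = (g, e)" by force
  show ?thesis
  proof (cases g)
    case GA then show ?thesis by (simp add: l fox_b_letter_def linv_def)
  next
    case GB
    show ?thesis
    proof (cases e)
      case True
      have "Phi_letter A B (linv l) ** Phi_letter A B l = mat 1" by (rule Phi_letter_inv[OF assms])
      then show ?thesis using True GB by (simp add: l fox_b_letter_def linv_def mm_uminus_r)
    next
      case False
      then show ?thesis using GB by (simp add: l fox_b_letter_def linv_def)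
    qed
  qed
qed

lemma fox_winv:
  assumes "det A = 1" "det B = 1"
  shows "Phi_fox_b A B (winv w) = - (Phi_word A B (winv w) ** Phi_fox_b A B w)"
proof (induction w)
  case Nil then show ?case by simp
next
  case (Cons l w)
  let ?W = "Phi_word A B (winv w)" and ?F = "Phi_fox_b A B w"
  let ?L = "Phi_letter A B l" and ?L' = "Phi_letter A B (linv l)" and ?f = "fox_b_letter A B l"
  have "Phi_fox_b A B (winv (l#w)) = - (?W ** ?F) + ?W ** (- (?L' ** ?f))"
    using Cons fox_letter_inv[OF assms, of l] by (simp add: Phi_fox_b_append)
  also have "\<dots> = - (?W ** ?F) - (?W ** ?L') ** ?f"
    by (simp add: mm_uminus_r matrix_mul_assoc)
  also have "?W ** ?F = ?W ** (?L' ** ?L) ** ?F" using Phi_letter_inv[OF assms, of l] by simp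
  also have "- (?W ** (?L' ** ?L) ** ?F) - (?W ** ?L') ** ?f = - ((?W ** ?L') ** (?f + ?L ** ?F))"
    by (simp add: mm_add_l matrix_mul_assoc)
  also have "\<dots> = - (Phi_word A B (winv (l#w)) ** Phi_fox_b A B (l#w))"
    by (simp add: Phi_word_append)
  finally show ?case .
qed

lemma det_mat1_minus_Phi_a:
  "det (mat 1 - Phi_letter A B (GA, False)) \<noteq> 0"
proof -
  note L = Phi_letter_mb[of A B "(GA,False)"]
  have w: "wl (GA,False) = 1" by (simp add: wl_def)
  have M: "mb (mat 1 - Phi_letter A B (GA, False)) 0 1"
    using L w by (intro mb_diff mb_mono[OF mb_one]) (auto intro: mb_mono)
  have c: "cf (Phi_letter A B (GA, False)) 0 = 0" using cf_out[of _ 1 1 0] L w by simp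
  have "det (mat 1 - Phi_letter A B (GA, False)) $$ (0+0) = 1"
    using mb_det(2)[OF M] c cf_one by simp
  thus ?thesis by (intro fls_nonzeroI[where n=0]) simp
qed

lemma twisted_alex_eq:
  assumes dA: "det A = 1" and dB: "det B = 1"
    and rel: "A ** rho_word A B (Jw m n) ** sl2_inv A = rho_word A B (Jw m n)"
  shows "twisted_alex m n A B = det (Phi_fox_b A B (Jw m n))"
proof -
  let ?w = "Jw m n"
  let ?a = "Phi_letter A B (GA, False)" and ?a' = "Phi_letter A B (GA, True)"
  let ?F = "Phi_fox_b A B ?w"
  have rJr: "rho_word A B (Jr m n) = mat 1"
  proof -
    have "rho_word A B (Jr m n) = (A ** rho_word A B ?w ** sl2_inv A) ** rho_word A B (winv ?w)"
      by (simp add: Jr_def rho_word_append matrix_mul_assoc rho_letter_def)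
    also have "\<dots> = mat 1" using rel rho_winv[OF dA dB] by simp
    finally show ?thesis .
  qed
  have PJr: "Phi_word A B (Jr m n) = mat 1"
  proof -
    note P = Phi_word_mb[of A B "Jr m n"]
    have "wt (Jr m n) = 0" by (simp add: Jr_def wl_def)
    thus ?thesis using P rJr by (intro mb_eq[OF _ mb_one]) (auto simp: cf_one)
  qed
  have "Phi_fox_b A B (Jr m n) = ?a ** (?F + Phi_word A B ?w ** (?a' ** (- (Phi_word A B (winv ?w) ** ?F))))"
    by (simp add: Jr_def Phi_fox_b_append fox_winv[OF dA dB] fox_b_letter_def)
  also have "\<dots> = ?a ** ?F - Phi_word A B (Jr m n) ** ?F"
    by (simp add: Jr_def Phi_word_append mm_add_l mm_diff_l mm_uminus_r matrix_mul_assoc)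
  also have "\<dots> = (?a - mat 1) ** ?F" using PJr by (simp add: mm_diff_r)
  finally have fJ: "Phi_fox_b A B (Jr m n) = (?a - mat 1) ** ?F" .
  have d: "det (?a - mat 1) = det (mat 1 - ?a)" by (simp add: det_2 algebra_simps)
  show ?thesis
    unfolding twisted_alex_def fJ det_mul d using det_mat1_minus_Phi_a[of A B] by simp
qed

abbreviation "wp \<equiv> [(GB, True), (GA, False)]"
abbreviation "wq \<equiv> [(GB, False), (GA, True)]"
abbreviation "wba \<equiv> [(GB, False), (GA, False)]"

lemma F_bounds:
  assumes dA: "det A = 1" and dB: "det B = 1"
  shows "mb (Phi_fox_b A B (Jw m (Suc k))) (-1) (2 * int k + 1) \<and>
         det (cf (Phi_fox_b A B (Jw m (Suc k))) (-1)) = det (gs (rho_word A B wp) m) \<and>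
         det (cf (Phi_fox_b A B (Jw m (Suc k))) (2 * int k + 1)) = det (gs (rho_word A B wp) m)"
proof -
  let ?X = "rho_word A B wp" and ?G = "gs (rho_word A B wp) m"
  let ?blk = "wpow wq m @ wba @ wpow wp m"
  have fp: "Phi_fox_b A B wp = - Phi_letter A B (GB, True)"
    by (simp add: fox_b_letter_def)
  note Lb = Phi_letter_mb[of A B "(GB,True)"]
  have wb: "wl (GB,True) = -1" by (simp add: wl_def)
  have mfp: "mb (Phi_fox_b A B wp) (-1) (-1)" "cf (Phi_fox_b A B wp) (-1) = - sl2_inv B"
    using Lb wb fp by (auto intro: mb_uminus simp: rho_letter_def)
  have wtp: "wt wp = 0" "wt wq = 0" "wt wba = 2" by (auto simp: wl_def)
  note F1 = fox_wpow0[OF wtp(1) mfp(1), of m]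
  have F1': "mb (Phi_fox_b A B (wpow wp m)) (-1) (-1)"
     "cf (Phi_fox_b A B (wpow wp m)) (-1) = ?G ** (- sl2_inv B)"
    using F1 mfp(2) by auto
  have fq: "Phi_fox_b A B wq = mat 1" "Phi_fox_b A B wba = mat 1"
    by (simp_all add: fox_b_letter_def)
  note Fq = fox_wpow0[OF wtp(2), of A B 0 0 m, unfolded fq, OF mb_one]
  have Pba: "mb (Phi_word A B wba) 2 2" "cf (Phi_word A B wba) 2 = rho_word A B wba"
    using Phi_word_mb[of A B wba] wtp(3) by auto
  note M1 = mb_mult[OF Pba(1) F1'(1)]
  have M1': "mb (Phi_word A B wba ** Phi_fox_b A B (wpow wp m)) 1 1"
    "cf (Phi_word A B wba ** Phi_fox_b A B (wpow wp m)) 1 = rho_word A B wba ** (?G ** (- sl2_inv B))"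
    using M1 Pba(2) F1'(2) by auto
  note D1 = mb_disj[OF mb_one M1'(1)]
  have F2: "mb (Phi_fox_b A B (wba @ wpow wp m)) 0 1"
     "cf (Phi_fox_b A B (wba @ wpow wp m)) 1 = rho_word A B wba ** (?G ** (- sl2_inv B))"
    using D1 M1'(2) unfolding Phi_fox_b_append[of A B wba] fq(2) by simp_all
  have Pq: "mb (Phi_word A B (wpow wq m)) 0 0" "cf (Phi_word A B (wpow wq m)) 0 = rho_word A B (wpow wq m)"
    using Phi_word_mb[of A B "wpow wq m"] wtp(2) by auto
  note M2 = mb_mult[OF Pq(1) F2(1)]
  have Fblk: "mb (Phi_fox_b A B ?blk) 0 1"
    "cf (Phi_fox_b A B ?blk) 1 = rho_word A B (wpow wq m) ** (rho_word A B wba ** (?G ** (- sl2_inv B)))"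
  proof -
    have a: "mb (Phi_fox_b A B (wpow wq m)) 0 1" using Fq by (auto intro: mb_mono)
    have b: "cf (Phi_fox_b A B (wpow wq m)) 1 = 0" using Fq cf_out[of _ 0 0 1] by auto
    show "mb (Phi_fox_b A B ?blk) 0 1"
      using a M2(1) unfolding Phi_fox_b_append[of A B "wpow wq m"] by (simp add: mb_add)
    show "cf (Phi_fox_b A B ?blk) 1 = rho_word A B (wpow wq m) ** (rho_word A B wba ** (?G ** (- sl2_inv B)))"
      using b M2(3) Pq(2) F2(2) unfolding Phi_fox_b_append[of A B "wpow wq m"] by simp
  qed
  have wtb: "wt ?blk = 2" using wtp by simp
  note Fn = fox_wpow2[OF wtb Fblk(1), of k]
  have Pp: "mb (Phi_word A B (wpow wp m)) 0 0" "cf (Phi_word A B (wpow wp m)) 0 = rho_word A B (wpow wp m)"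
    using Phi_word_mb[of A B "wpow wp m"] wtp(1) by auto
  note M3 = mb_mult[OF Pp(1) conjunct1[OF Fn]]
  have M3': "mb (Phi_word A B (wpow wp m) ** Phi_fox_b A B (wpow ?blk (Suc k))) 0 (2 * int k + 1)"
    using M3 by simp
  note D = mb_disj[OF F1'(1) M3']
  have JwE: "Jw m (Suc k) = wpow wp m @ wpow ?blk (Suc k)" by (simp add: Jw_def)
  define T where "T = rho_word A B (wpow wp m) ** (mp (rho_word A B ?blk) k **
      (rho_word A B (wpow wq m) ** (rho_word A B wba ** (?G ** (- sl2_inv B)))))"
  have top: "cf (Phi_fox_b A B (Jw m (Suc k))) (2 * int k + 1) = T"
    using D(3) M3(3) Pp(2) Fn Fblk(2) unfolding JwE Phi_fox_b_append[of A B "wpow wp m"] T_def by simp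
  have bot: "cf (Phi_fox_b A B (Jw m (Suc k))) (-1) = ?G ** (- sl2_inv B)"
    using D(2) F1'(2) unfolding JwE Phi_fox_b_append[of A B "wpow wp m"] by simp
  have dmp: "det (mp M j) = 1" if "det M = 1" for M j
    using that by (induction j) (auto simp: det_mul)
  have dS: "det (- sl2_inv B) = 1" using dB by (simp add: det_uminus2 det_sl2_inv)
  have dT: "det T = det ?G"
    unfolding T_def det_mul using dmp[OF det_rho_word[OF dA dB]] det_rho_word[OF dA dB, of wba]
      det_rho_word[OF dA dB, of "wpow wp m"] det_rho_word[OF dA dB, of "wpow wq m"] dS
    by (simp del: rho_word_simps)
  have "mb (Phi_fox_b A B (Jw m (Suc k))) (-1) (2 * int k + 1)"
    using D(1) unfolding JwE Phi_fox_b_append[of A B "wpow wp m"] by simp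
  thus ?thesis using top bot dT dS by (simp add: det_mul)
qed

lemma deg_from_sb:
  assumes "sb f lo hi" "f $$ lo \<noteq> 0" "f $$ hi \<noteq> 0"
  shows "f \<noteq> 0" "is_laurent_poly f" "laurent_deg f = hi - lo"
proof -
  show "f \<noteq> 0" using assms(2) fls_nonzeroI by blast
  have sub: "{k. f $$ k \<noteq> 0} \<subseteq> {lo..hi}" using assms(1) unfolding sb_def by (auto simp: not_less[symmetric])
  show "is_laurent_poly f" unfolding is_laurent_poly_def by (rule finite_subset[OF sub]) simp
  have g: "(GREATEST k. f $$ k \<noteq> 0) = hi"
    by (rule Greatest_equality) (use assms sub in auto)
  have s: "fls_subdegree f = lo"
    by (rule fls_subdegree_eqI) (use assms in \<open>auto simp: sb_def\<close>)
  show "laurent_deg f = hi - lo" by (simp add: laurent_deg_def g s)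
qed

lemma main_from_detG:
  assumes dA: "det A = 1" and dB: "det B = 1" and n: "n \<ge> 1"
    and rel: "A ** rho_word A B (Jw m n) ** sl2_inv A = rho_word A B (Jw m n)"
    and G: "det (gs (rho_word A B wp) m) \<noteq> 0"
  shows "twisted_alex m n A B \<noteq> 0 \<and> is_laurent_poly (twisted_alex m n A B) \<and>
         laurent_deg (twisted_alex m n A B) = 4 * int n"
proof -
  obtain k where k: "n = Suc k" using n by (cases n) auto
  note T = twisted_alex_eq[OF dA dB rel]
  note FB = F_bounds[OF dA dB, of m k]
  let ?F = "Phi_fox_b A B (Jw m (Suc k))"
  note Dt = mb_det[OF conjunct1[OF FB]]
  have h: "sb (det ?F) (-1 + -1) (2 * int k + 1 + (2 * int k + 1))"
     "det ?F $$ (-1 + -1) \<noteq> 0" "det ?F $$ (2 * int k + 1 + (2 * int k + 1)) \<noteq> 0"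
    using Dt FB G by auto
  note R = deg_from_sb[OF h]
  show ?thesis using R T k by simp
qed

lemma tr2: "trace (M::'a::comm_ring_1^2^2) = M$1$1 + M$2$2" by (simp add: trace_def sum_2)

lemma CH2: assumes "det (X::complex^2^2) = 1" shows "X ** X = mat (trace X) ** X - mat 1"
  using assms by (auto simp: vec_eq_iff forall_2 mult_2x2 det_2 tr2 mat_def algebra_simps)

lemma mp_comm: "X ** mp X k = mp X k ** X"
  by (induction k) (auto simp: matrix_mul_assoc)

lemma tele: "(X - mat 1) ** gs X k = mp X k - mat 1"
proof (induction k)
  case 0 then show ?case by simp
next
  case (Suc k)
  have "(X - mat 1) ** gs X (Suc k) = (X - mat 1) + ((X - mat 1) ** X) ** gs X k"
    by (simp add: mm_add_l matrix_mul_assoc)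
  also have "(X - mat 1) ** X = X ** (X - mat 1)" by (simp add: mm_diff_l mm_diff_r)
  also have "(X - mat 1) + (X ** (X - mat 1)) ** gs X k = X - mat 1 + X ** (mp X k - mat 1)"
    using Suc by (simp add: matrix_mul_assoc[symmetric])
  also have "\<dots> = mp X (Suc k) - mat 1" by (simp add: mm_diff_l)
  finally show ?case .
qed

lemma tr_matmul: "trace (mat c ** (M::complex^2^2)) = c * trace M"
  by (simp add: tr2 mult_2x2 mat_def algebra_simps)
lemma tr_sub: "trace ((M::complex^2^2) - N) = trace M - trace N"
  by (simp add: tr2)

lemma tr_rec:
  assumes "det (X::complex^2^2) = 1"
  shows "trace (mp X (Suc (Suc k))) = trace X * trace (mp X (Suc k)) - trace (mp X k)"
proof -
  have "mp X (Suc (Suc k)) = (X ** X) ** mp X k" by (simp add: matrix_mul_assoc)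
  also have "\<dots> = mat (trace X) ** (X ** mp X k) - mp X k"
    by (simp add: CH2[OF assms] mm_diff_r matrix_mul_assoc)
  finally have "trace (mp X (Suc (Suc k))) = trace (mat (trace X) ** (X ** mp X k) - mp X k)"
    by (rule arg_cong)
  thus ?thesis by (simp only: tr_sub tr_matmul mp.simps)
qed

lemma tr_lambda:
  assumes "det (X::complex^2^2) = 1" "l \<noteq> 0" "trace X = l + 1/l"
  shows "trace (mp X k) = l^k + (1/l)^k"
proof -
  have "trace (mp X k) = l^k + (1/l)^k \<and> trace (mp X (Suc k)) = l^(Suc k) + (1/l)^(Suc k)"
  proof (induction k)
    case 0 then show ?case using assms by (simp, simp add: tr2 mat_def)
  next
    case (Suc k)
    have "trace (mp X (Suc (Suc k))) = (l + 1/l) * (l^(Suc k) + (1/l)^(Suc k)) - (l^k + (1/l)^k)"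
      using tr_rec[OF assms(1), of k] Suc assms(3) by simp
    also have "\<dots> = l^(Suc (Suc k)) + (1/l)^(Suc (Suc k))"
      using assms(2) by (simp add: field_simps power_Suc)
    finally show ?case using Suc by simp
  qed
  thus ?thesis by simp
qed

lemma det_minus_one2: "det ((M::complex^2^2) - mat 1) = det M - trace M + 1"
  by (simp add: det_2 tr2 mat_def algebra_simps)

lemma det_mp: "det (X::complex^2^2) = 1 \<Longrightarrow> det (mp X k) = 1"
  by (induction k) (auto simp: det_mul)

lemma dzh: "L - R = P \<Longrightarrow> P = 0 \<Longrightarrow> (L::complex) = R" by simp

lemma z2_11: fixes a b c d e k :: complex assumes "a + d = 2" "a*d - b*c = 1"
  shows "1 + (a * (k + e*(a-1)) + b * (e*c)) = (1 + k) + (k+e)*(a-1)"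
proof -
  have D: "1 + (a * (k + e*(a-1)) + b * (e*c)) - ((1 + k) + (k+e)*(a-1)) = e*(b*c - (a*d - 1)) + (e*a)*(a + d - 2)"
    by (simp add: algebra_simps)
  moreover have z: "b*c - (a*d - 1) = 0" "a + d - 2 = 0" using assms by (simp_all add: algebra_simps)
  show ?thesis by (rule dzh[OF D]) (simp only: z mult_zero_right add_0_left)
qed
lemma z2_12: fixes a b c d e k :: complex assumes "a + d = 2"
  shows "a * (e*b) + b * (k + e*(d-1)) = (k+e)*b"
proof -
  have D: "a * (e*b) + b * (k + e*(d-1)) - (k+e)*b = (b*e)*(a + d - 2)"
    by (simp add: algebra_simps)
  moreover have z: "a + d - 2 = 0" using assms by simp
  show ?thesis by (rule dzh[OF D]) (simp only: z mult_zero_right add_0_left)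
qed
lemma z2_21: fixes a b c d e k :: complex assumes "a + d = 2"
  shows "c * (k + e*(a-1)) + d * (e*c) = (k+e)*c"
proof -
  have D: "c * (k + e*(a-1)) + d * (e*c) - (k+e)*c = (c*e)*(a + d - 2)"
    by (simp add: algebra_simps)
  moreover have z: "a + d - 2 = 0" using assms by simp
  show ?thesis by (rule dzh[OF D]) (simp only: z mult_zero_right add_0_left)
qed
lemma z2_22: fixes a b c d e k :: complex assumes "a + d = 2" "a*d - b*c = 1"
  shows "1 + (c * (e*b) + d * (k + e*(d-1))) = (1 + k) + (k+e)*(d-1)"
proof -
  have D: "1 + (c * (e*b) + d * (k + e*(d-1))) - ((1 + k) + (k+e)*(d-1)) = e*(b*c - (a*d - 1)) + (e*d)*(a + d - 2)"
    by (simp add: algebra_simps)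
  moreover have z: "b*c - (a*d - 1) = 0" "a + d - 2 = 0" using assms by (simp_all add: algebra_simps)
  show ?thesis by (rule dzh[OF D]) (simp only: z mult_zero_right add_0_left)
qed
lemma z2_det: fixes a b c d e k :: complex assumes "a + d = 2" "a*d - b*c = 1"
  shows "(k + e*(a-1)) * (k + e*(d-1)) - (e*b) * (e*c) = k*k"
proof -
  have D: "(k + e*(a-1)) * (k + e*(d-1)) - (e*b) * (e*c) - k*k = (k*e - e*e)*(a + d - 2) + (e*e)*(a*d - b*c - 1)"
    by (simp add: algebra_simps)
  have z: "a*d - b*c - 1 = 0" "a + d - 2 = 0" using assms by simp_all
  show ?thesis by (rule dzh[OF D]) (simp only: z mult_zero_right add_0_left)
qed

lemma gs_z2:
  assumes "det (X::complex^2^2) = 1" "trace X = 2"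
  shows "\<exists>e. gs X k $1$1 = of_nat k + e * (X$1$1 - 1) \<and> gs X k $1$2 = e * X$1$2 \<and>
             gs X k $2$1 = e * X$2$1 \<and> gs X k $2$2 = of_nat k + e * (X$2$2 - 1)"
proof (induction k)
  case 0 then show ?case by (intro exI[of _ 0]) simp
next
  case (Suc k)
  then obtain e where E: "gs X k $1$1 = of_nat k + e * (X$1$1 - 1) \<and> gs X k $1$2 = e * X$1$2 \<and>
             gs X k $2$1 = e * X$2$1 \<and> gs X k $2$2 = of_nat k + e * (X$2$2 - 1)" by (elim exE) 
  note e = conjunct1[OF E] conjunct1[OF conjunct2[OF E]] conjunct1[OF conjunct2[OF conjunct2[OF E]]]
     conjunct2[OF conjunct2[OF conjunct2[OF E]]]
  have h1: "X$1$1 + X$2$2 = 2" using assms(2) by (simp add: tr2)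
  have h2: "X$1$1 * X$2$2 - X$1$2 * X$2$1 = 1" using assms(1) by (simp add: det_2)
  have g: "gs X (Suc k) $1$1 = 1 + (X$1$1 * gs X k $1$1 + X$1$2 * gs X k $2$1)"
     "gs X (Suc k) $1$2 = X$1$1 * gs X k $1$2 + X$1$2 * gs X k $2$2"
     "gs X (Suc k) $2$1 = X$2$1 * gs X k $1$1 + X$2$2 * gs X k $2$1"
     "gs X (Suc k) $2$2 = 1 + (X$2$1 * gs X k $1$2 + X$2$2 * gs X k $2$2)"
    by (simp_all add: mult_2x2 mat_def)
  show ?case
  proof (intro exI[of _ "of_nat k + e"] conjI)
    show "gs X (Suc k) $1$1 = of_nat (Suc k) + (of_nat k + e) * (X$1$1 - 1)"
      unfolding g e of_nat_Suc by (rule z2_11[OF h1 h2])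
    show "gs X (Suc k) $1$2 = (of_nat k + e) * X$1$2"
      unfolding g e by (rule z2_12[OF h1])
    show "gs X (Suc k) $2$1 = (of_nat k + e) * X$2$1"
      unfolding g e by (rule z2_21[OF h1])
    show "gs X (Suc k) $2$2 = of_nat (Suc k) + (of_nat k + e) * (X$2$2 - 1)"
      unfolding g e of_nat_Suc by (rule z2_22[OF h1 h2])
  qed
qed

lemma det_gs_z2:
  assumes "det (X::complex^2^2) = 1" "trace X = 2"
  shows "det (gs X k) = of_nat k * of_nat k"
proof -
  obtain e where e: "gs X k $1$1 = of_nat k + e * (X$1$1 - 1)" "gs X k $1$2 = e * X$1$2"
             "gs X k $2$1 = e * X$2$1" "gs X k $2$2 = of_nat k + e * (X$2$2 - 1)"
    using gs_z2[OF assms, of k] by (elim exE conjE)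
  have h1: "X$1$1 + X$2$2 = 2" using assms(2) by (simp add: tr2)
  have h2: "X$1$1 * X$2$2 - X$1$2 * X$2$1 = 1" using assms(1) by (simp add: det_2)
  show ?thesis unfolding det_2 e by (rule z2_det[OF h1 h2])
qed

lemma ex_lambda: "\<exists>l::complex. l \<noteq> 0 \<and> z = l + 1/l"
proof -
  define s where "s = csqrt (z^2 - 4)"
  have s2: "s^2 = z^2 - 4" by (simp add: s_def)
  define l where "l = (z + s)/2"
  have l0: "l \<noteq> 0"
  proof
    assume "l = 0"
    hence "s = -z" by (simp add: l_def add_eq_0_iff)
    hence "s^2 = z^2" by simp
    thus False using s2 by simp
  qed
  have "l * l - z * l + 1 = (s^2 - (z^2 - 4)) / 4" by (simp add: l_def field_simps power2_eq_square)
  hence q: "l * l - z * l + 1 = 0" using s2 by simp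
  have "z = l + 1/l"
  proof -
    have "z * l = l * l + 1" using q by (simp add: algebra_simps)
    thus ?thesis using l0 by (simp add: field_simps)
  qed
  thus ?thesis using l0 by blast
qed

lemma cheb_lm:
  fixes l m :: complex assumes lm: "l * m = 1"
  shows "cheb k (l + m) * (l - m) = l^(Suc k) - m^(Suc k)"
proof -
  have a: "l * m^(Suc n) = m^n" for n using lm by (simp add: mult.assoc[symmetric])
  have b: "m * l^(Suc n) = l^n" for n using lm by (simp add: mult.assoc[symmetric] mult.commute)
  have "cheb k (l + m) * (l - m) = l^(Suc k) - m^(Suc k) \<and>
        cheb (Suc k) (l + m) * (l - m) = l^(Suc (Suc k)) - m^(Suc (Suc k))"
  proof (induction k)
    case 0
    have "(l + m) * (l - m) = l * l - m * m" by (simp add: algebra_simps)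
    then show ?case by (simp add: power2_eq_square)
  next
    case (Suc k)
    have "cheb (Suc (Suc k)) (l + m) * (l - m) =
          (l + m) * (cheb (Suc k) (l + m) * (l - m)) - cheb k (l + m) * (l - m)"
      by (simp add: algebra_simps)
    also have "\<dots> = (l + m) * (l^(Suc (Suc k)) - m^(Suc (Suc k))) - (l^(Suc k) - m^(Suc k))"
      using Suc by simp
    also have "(l + m) * (l^(Suc (Suc k)) - m^(Suc (Suc k))) =
       l * l^(Suc (Suc k)) - l * m^(Suc (Suc k)) + m * l^(Suc (Suc k)) - m * m^(Suc (Suc k))"
      by (simp add: algebra_simps)
    also have "\<dots> = l^(Suc (Suc (Suc k))) - m^(Suc k) + l^(Suc k) - m^(Suc (Suc (Suc k)))"
      by (simp only: a b power_Suc[symmetric])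
    finally show ?case using Suc by simp
  qed
  thus ?thesis by simp
qed

lemma cheb_lambda:
  assumes "l \<noteq> (0::complex)"
  shows "cheb k (l + 1/l) * (l - 1/l) = l^(Suc k) - (1/l)^(Suc k)"
  by (rule cheb_lm) (use assms in simp)

lemma cheb_2: "cheb k 2 = of_nat k + 1"
proof -
  have "cheb k 2 = of_nat k + 1 \<and> cheb (Suc k) 2 = of_nat (Suc k) + 1"
    by (induction k) (auto simp: algebra_simps)
  thus ?thesis by simp
qed

lemma cheb_m2: "cheb k (-2) = (-1)^k * (of_nat k + 1)"
proof -
  have "cheb k (-2) = (-1)^k * (of_nat k + 1) \<and> cheb (Suc k) (-2) = (-1)^(Suc k) * (of_nat (Suc k) + 1)"
  proof (induction k)
    case 0 then show ?case by simp
  next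
    case (Suc k)
    hence e0: "cheb k (-2) = (-1)^k * (of_nat k + 1)"
      and e1: "cheb (Suc k) (-2) = (-1)^(Suc k) * (of_nat (Suc k) + 1)" by auto
    have "cheb (Suc (Suc k)) (-2) = (-2) * cheb (Suc k) (-2) - cheb k (-2)" by simp
    also have "\<dots> = (-1)^(Suc (Suc k)) * (of_nat (Suc (Suc k)) + 1)"
      unfolding e0 e1 by (simp add: algebra_simps)
    finally show ?case using e1 by simp
  qed
  thus ?thesis by simp
qed

lemma exp_root_cis: "exp(2 * of_real pi * \<i> * of_nat j / of_nat N) = cis (2 * pi * real j / real N)"
  by (simp add: cis_conv_exp field_simps)

lemma cis_plus_inv: "cis t + 1 / cis t = complex_of_real (2 * cos t)"
  by (simp add: complex_eq_iff divide_inverse)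

lemma reduce_root:
  assumes "(l::complex)^N = 1" "N \<ge> 1" "l \<noteq> 1" "l \<noteq> -1"
  shows "\<exists>j. 1 \<le> j \<and> 2 * j < N \<and> l + 1/l = complex_of_real (2 * cos (2 * pi * real j / real N))"
proof -
  have "l \<in> {z::complex. z^N = 1}" using assms by simp
  then obtain j0 where j0: "j0 < N" "l = exp(2 * of_real pi * \<i> * of_nat j0 / of_nat N)"
    unfolding complex_roots_unity[OF assms(2)] by blast
  have lc: "l = cis (2 * pi * real j0 / real N)" using j0 exp_root_cis by simp
  have "j0 \<noteq> 0"
  proof
    assume "j0 = 0" thus False using lc assms(3) by simp
  qed
  have "2 * j0 \<noteq> N"
  proof
    assume "2 * j0 = N"
    hence "real N = 2 * real j0" by simp
    hence "2 * pi * real j0 / real N = pi" using \<open>j0 \<noteq> 0\<close> by simp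
    thus False using lc assms(4) by simp
  qed
  show ?thesis
  proof (cases "2 * j0 < N")
    case True
    thus ?thesis using \<open>j0 \<noteq> 0\<close> lc cis_plus_inv by (intro exI[of _ j0]) auto
  next
    case False
    hence gt: "N < 2 * j0" using \<open>2 * j0 \<noteq> N\<close> by simp
    have e: "2 * pi * real (N - j0) / real N = 2 * pi - 2 * pi * real j0 / real N"
      using j0(1) assms(2) by (simp add: of_nat_diff field_simps)
    have c: "cos (2 * pi * real (N - j0) / real N) = cos (2 * pi * real j0 / real N)"
      unfolding e by simp
    have "l + 1/l = complex_of_real (2 * cos (2 * pi * real (N - j0) / real N))"
      by (simp only: lc cis_plus_inv c)
    thus ?thesis using j0(1) gt by (intro exI[of _ "N - j0"]) auto
  qed
qed

lemma Kk:
  assumes "cheb (n-1) w = 0" "n \<ge> 1"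
  shows "\<exists>k. 1 \<le> k \<and> k \<le> n - 1 \<and> w = complex_of_real (2 * cos (real k * pi / real n))"
proof -
  obtain u where u: "u \<noteq> 0" "w = u + 1/u" using ex_lambda by blast
  have sn: "Suc (n-1) = n" using assms(2) by simp
  have u1: "u \<noteq> 1"
  proof
    assume "u = 1"
    hence "w = 2" using u by simp
    hence "cheb (n-1) w = of_nat (n-1) + 1" by (simp add: cheb_2)
    hence "cheb (n-1) w = of_nat n" using sn by (metis of_nat_Suc add.commute)
    thus False using assms by simp
  qed
  have u2: "u \<noteq> -1"
  proof
    assume "u = -1"
    hence "w = -2" using u by simp
    hence "cheb (n-1) w = (-1)^(n-1) * (of_nat (n-1) + 1)" by (simp add: cheb_m2)
    hence "cheb (n-1) w = (-1)^(n-1) * of_nat n" using sn by (metis of_nat_Suc add.commute)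
    thus False using assms by simp
  qed
  have "u^n - (1/u)^n = 0"
    using cheb_lambda[OF u(1), of "n-1"] assms(1) u(2) sn by simp
  hence "u^n * (1/u)^n = u^n * u^n" by simp
  hence "u^(2*n) = 1" using u(1) by (simp add: power_mult_distrib[symmetric] mult_2 power_add)
  then obtain j where j: "1 \<le> j" "2 * j < 2 * n" "u + 1/u = complex_of_real (2 * cos (2 * pi * real j / real (2 * n)))"
    using reduce_root[of u "2*n"] assms(2) u1 u2 by auto
  have e: "2 * pi * real j / real (2 * n) = real j * pi / real n" using assms(2) by (simp add: field_simps)
  have j3: "w = complex_of_real (2 * cos (real j * pi / real n))" using j(3)[unfolded e] u(2) by simp
  show ?thesis using j(1,2) j3 by (intro exI[of _ j]) auto
qed

lemma Zj:
  assumes "(l::complex)^m = 1" "m \<ge> 1" "l \<noteq> 1" "l \<noteq> -1"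
  shows "\<exists>j. 1 \<le> j \<and> 2*j < m \<and> l + 1/l = complex_of_real (2 * cos (2 * real j * pi / real m))"
proof -
  obtain j where j: "1 \<le> j" "2 * j < m" "l + 1/l = complex_of_real (2 * cos (2 * pi * real j / real m))"
    using reduce_root[OF assms] by blast
  have e: "2 * pi * real j / real m = 2 * real j * pi / real m" by (simp add: mult_ac)
  show ?thesis using j(1,2) j(3)[unfolded e] by (intro exI[of _ j]) auto
qed

lemma vid:
  fixes x y :: complex and m :: nat
  shows "(x * (of_nat m + 1) - y * (- of_nat m)) * (y * (of_nat m + 1) - x * (- of_nat m))
     - (-2) * ((of_nat m + 1)^2 + (- of_nat m)^2) + 4 * (of_nat m + 1) * (- of_nat m)
     = x * y + 2 + of_nat (m^2 + m) * (x + y)^2"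
  by (simp add: algebra_simps power2_eq_square)

theorem proposition4p7:
  fixes m n :: nat and A B :: "complex^2^2"
  assumes "m \<ge> 1" and "n \<ge> 1"
    and "det A = 1" and "det B = 1"
    and "A ** rho_word A B (Jw m n) ** sl2_inv A = rho_word A B (Jw m n)"
    and "A ** B \<noteq> B ** A"
    and "Rpoly m n (trace A) (trace B) (trace (A ** sl2_inv B)) = 0"
    and "\<forall>j k. 1 \<le> j \<and> 2 * j < m \<and> 1 \<le> k \<and> k \<le> n - 1 \<longrightarrow>
           (trace A, trace B, trace (A ** sl2_inv B)) \<notin> Yjk m n j k"
    and "even m \<longrightarrow> (trace A, trace B, trace (A ** sl2_inv B)) \<notin> Yexc m n"
  shows "twisted_alex m n A B \<noteq> 0 \<and> is_laurent_poly (twisted_alex m n A B) \<and>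
         laurent_deg (twisted_alex m n A B) = 4 * int n"
proof -
  define X where "X = rho_word A B wp"
  define x where "x = trace A"
  define y where "y = trace B"
  define z where "z = trace (A ** sl2_inv B)"
  have Xe: "X = sl2_inv B ** A" by (simp add: X_def rho_letter_def)
  have dX: "det X = 1" unfolding X_def by (rule det_rho_word[OF assms(3,4)])
  have trX: "trace X = z" by (simp add: Xe z_def tr2 mult_2x2 algebra_simps)
  have R: "Rpoly m n x y z = 0" using assms(7) by (simp add: x_def y_def z_def)
  have Y8: "\<And>j k. 1 \<le> j \<Longrightarrow> 2 * j < m \<Longrightarrow> 1 \<le> k \<Longrightarrow> k \<le> n - 1 \<Longrightarrow> (x, y, z) \<notin> Yjk m n j k"
    using assms(8) by (simp add: x_def y_def z_def)
  have Y9: "even m \<Longrightarrow> (x, y, z) \<notin> Yexc m n" using assms(9) by (simp add: x_def y_def z_def)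
  have G: "det (gs X m) \<noteq> 0"
  proof
    assume G0: "det (gs X m) = 0"
    have z2: "z \<noteq> 2"
    proof
      assume "z = 2"
      hence "det (gs X m) = of_nat m * of_nat m" using det_gs_z2[OF dX] trX by simp
      thus False using G0 assms(1) by simp
    qed
    have "det ((X - mat 1) ** gs X m) = det (mp X m - mat 1)" using tele[of X m] by simp
    hence "det (mp X m) - trace (mp X m) + 1 = 0" using G0 by (simp add: det_mul det_minus_one2)
    hence trm: "trace (mp X m) = 2" using det_mp[OF dX] by (simp add: algebra_simps)
    obtain l where l: "l \<noteq> 0" "z = l + 1/l" using ex_lambda by blast
    have "l^m + (1/l)^m = 2" using tr_lambda[OF dX l(1)] trX l(2) trm by simp
    hence L: "l^m + 1/(l^m) = 2" by (simp add: power_one_over)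
    have lm0: "l^m \<noteq> 0" using l(1) by simp
    have "(l^m - 1)^2 = 0"
    proof -
      have "l^m * (l^m + 1/(l^m)) = l^m * 2" using L by simp
      hence "l^m * l^m + 1 = 2 * l^m" using lm0 l(1) by (simp add: distrib_left mult.commute)
      thus ?thesis by (simp add: power2_eq_square algebra_simps)
    qed
    hence lm: "l^m = 1" by simp
    have l1: "l \<noteq> 1" using z2 l(2) by auto
    show False
    proof (cases "l = -1")
      case True
      hence zm2: "z = -2" using l(2) by simp
      have em: "even m"
      proof (rule ccontr)
        assume "odd m"
        hence "l^m = -1" using True by simp
        thus False using lm by simp
      qed
      have m2: "m \<ge> 2"
      proof (rule ccontr)
        assume "\<not> m \<ge> 2" hence "m = 1" using assms(1) by simp
        thus False using em by simp
      qed
      have om1: "odd (m - 1)" using em m2 by simp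
      have sm: "of_nat (m - 1) + 1 = (of_nat m :: complex)" using m2 by (simp add: of_nat_diff)
      have c0: "cheb (m-1) (-2) = - of_nat m" using om1 sm by (simp add: cheb_m2)
      have c1: "cheb m (-2) = of_nat m + 1" using em by (simp add: cheb_m2)
      define v1 where "v1 = x * y + 2 + of_nat (m^2 + m) * (x + y)^2"
      have "Rpoly m n x y z = cheb (m-1) (-2) * cheb n v1 - cheb m (-2) * cheb (n-1) v1"
        unfolding Rpoly_def Let_def zm2 c0 c1 vid v1_def ..
      hence H: "(- of_nat m) * cheb n v1 - (of_nat m + 1) * cheb (n-1) v1 = 0" using R c0 c1 by simp
      have "of_nat m * cheb n v1 + of_nat (m + 1) * cheb (n-1) v1 =
            - ((- of_nat m) * cheb n v1 - (of_nat m + 1) * cheb (n-1) v1)" by (simp add: algebra_simps)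
      hence "of_nat m * cheb n v1 + of_nat (m + 1) * cheb (n-1) v1 = - 0" by (simp only: H)
      hence "of_nat m * cheb n v1 + of_nat (m + 1) * cheb (n-1) v1 = 0" by simp
      hence "(x, y, z) \<in> Yexc m n" using zm2 by (simp add: Yexc_def v1_def Let_def)
      thus False using Y9 em by simp
    next
      case False
      have d: "l - 1/l \<noteq> 0"
      proof
        assume "l - 1/l = 0"
        hence "l * l = 1" using l(1) by (simp add: field_simps)
        hence "(l - 1) * (l + 1) = 0" by (simp add: algebra_simps)
        thus False using l1 False by (auto simp: add_eq_0_iff minus_equation_iff)
      qed
      have sm: "Suc (m-1) = m" using assms(1) by simp
      have p1: "(1/l)^m = 1" using lm by (simp add: power_one_over)
      have "cheb (m-1) z * (l - 1/l) = 0"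
        using cheb_lambda[OF l(1), of "m-1"] l(2) sm lm p1 by simp
      hence c0: "cheb (m-1) z = 0" using d by simp
      have "cheb m z * (l - 1/l) = l - 1/l"
        using cheb_lambda[OF l(1), of m] l(2) lm p1 by simp
      hence c1: "cheb m z = 1" using d by simp
      have "cheb (n-1) (x * y - z) = 0"
        using R unfolding Rpoly_def Let_def c0 c1 by simp
      then obtain k where k: "1 \<le> k" "k \<le> n - 1" "x * y - z = complex_of_real (2 * cos (real k * pi / real n))"
        using Kk assms(2) by blast
      obtain j where j: "1 \<le> j" "2*j < m" "l + 1/l = complex_of_real (2 * cos (2 * real j * pi / real m))"
        using Zj[OF lm assms(1) l1 False] by blast
      have "(x, y, z) \<in> Yjk m n j k" using j(3) k(3) l(2) by (simp add: Yjk_def)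
      thus False using Y8 j k by blast
    qed
  qed
  show ?thesis using main_from_detG[OF assms(3,4,2,5)] G X_def by simp
qed

end
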